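(* For every tight Rabin GFG automaton, there exists an equivalent strongly tight Rabin GFG automaton over the same structure.
   Context: An automaton is $\mathcal{A}=\langle\Sigma,Q,Q_0,\delta,\alpha\rangle$ with structure $\langle\Sigma,Q,Q_0,\delta\rangle$ ($\delta:Q\times\Sigma\to2^Q$). In a Rabin automaton $\alpha$ is a set of pairs $\langle E,F\rangle$ of sets of states ($E$ the bad set, $F$ the good set); a set $S$ of states is accepting if for some pair $S\cap E=\emptyset$ and $S\cap F\neq\emptyset$; a run is accepting if its set of infinitely visited states is accepting. $\mathcal{A}$ is GFG if there is a strategy $g:\Sigma^*\to Q$ such that for every $w=a_1a_2\cdots$, $g(\epsilon),g(a_1),g(a_1a_2),\ldots$ is a run on $w$, accepting whenever $w\in L(\mathcal{A})$. Finite-state strategies are transducers $g=\langle\Sigma,Q,M,m_0,\rho,\tau\rangle$ (finite memories $M$, $\rho:M\times\Sigma\to M$ extended to words from $m_0$, $\tau:M\to Q$, $g(u)=\tau(\rho(u))$); $m$ is a memory of $q$ if $\tau(m)=q$. $\mathcal{A}_g=\langle\Sigma,M,m_0,\rho,\alpha_g\rangle$ where $\alpha_g$ replaces each set $F$ in $\alpha$ by $\{m\mid\tau(m)\in F\}$. A transition $\langle q,a,q'\rangle$ is used by $g$ if $q=g(u)$, $q'=g(ua)$ for some $u$. Paths are finite sequences of states joined by transitions, cycles are paths whose first and last elements coincide; for a set $P$ of paths, a combination is the union of the state sets of a nonempty subset of $P$. For memories $m\neq m'$ with $\tau(m)=\tau(m')$, $m$ is replaceable by $m'$ if the set of paths of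 $\mathcal{A}_g$ from $m'$ to $m$ is empty or all its combinations are accepting. $\mathcal{A}$ is tight w.r.t. a finite-state strategy $g$ witnessing GFGness if all transitions are used by $g$ and no memory is replaceable by a different memory of the same state; tight if tight w.r.t. some such $g$. For a state $q$, a path of $\mathcal{A}_g$ is $q$-exclusive accepting if its set of memories is accepting but that set minus the memories of $q$ is not accepting. A Rabin GFG automaton is strongly tight w.r.t. $g$ if it is tight w.r.t. $g$ and for every state $q$ appearing in some good set of $\alpha$ there is a $q$-exclusive accepting cycle in $\mathcal{A}_g$; strongly tight if so w.r.t. some $g$. Equivalent means same language; over the same structure means only the acceptance condition differs. *)

theory Defs
  imports Main
begin

definition wf_rabin ::
  "'a set \<Rightarrow> 'q set \<Rightarrow> 'q set \<Rightarrow> ('q \<Rightarrow> 'a \<Rightarrow> 'q set) \<Rightarrow> ('q set \<times> 'q set) set \<Rightarrow> bool" where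
  "wf_rabin S Q Q0 d al \<longleftrightarrow> finite S \<and> finite Q \<and> Q0 \<subseteq> Q \<and>
     (\<forall>q\<in>Q. \<forall>a\<in>S. d q a \<subseteq> Q) \<and> finite al \<and> (\<forall>(E,F)\<in>al. E \<subseteq> Q \<and> F \<subseteq> Q)"

definition rabin_acc :: "('s set \<times> 's set) set \<Rightarrow> 's set \<Rightarrow> bool" where
  "rabin_acc al X \<longleftrightarrow> (\<exists>(E,F)\<in>al. X \<inter> E = {} \<and> X \<inter> F \<noteq> {})"

definition inf_set :: "(nat \<Rightarrow> 's) \<Rightarrow> 's set" where
  "inf_set r = {q. \<exists>\<^sub>\<infinity> i. r i = q}"

definition is_word :: "'a set \<Rightarrow> (nat \<Rightarrow> 'a) \<Rightarrow> bool" where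
  "is_word S w \<longleftrightarrow> (\<forall>i. w i \<in> S)"

definition is_run :: "'q set \<Rightarrow> ('q \<Rightarrow> 'a \<Rightarrow> 'q set) \<Rightarrow> (nat \<Rightarrow> 'a) \<Rightarrow> (nat \<Rightarrow> 'q) \<Rightarrow> bool" where
  "is_run Q0 d w r \<longleftrightarrow> r 0 \<in> Q0 \<and> (\<forall>i. r (Suc i) \<in> d (r i) (w i))"

definition lang ::
  "'a set \<Rightarrow> 'q set \<Rightarrow> ('q \<Rightarrow> 'a \<Rightarrow> 'q set) \<Rightarrow> ('q set \<times> 'q set) set \<Rightarrow> (nat \<Rightarrow> 'a) set" where
  "lang S Q0 d al = {w. is_word S w \<and> (\<exists>r. is_run Q0 d w r \<and> rabin_acc al (inf_set r))}"

definition pref :: "(nat \<Rightarrow> 'a) \<Rightarrow> nat \<Rightarrow> 'a list" where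
  "pref w i = map w [0..<i]"

definition gfg_strategy ::
  "'a set \<Rightarrow> 'q set \<Rightarrow> ('q \<Rightarrow> 'a \<Rightarrow> 'q set) \<Rightarrow> ('q set \<times> 'q set) set \<Rightarrow> ('a list \<Rightarrow> 'q) \<Rightarrow> bool" where
  "gfg_strategy S Q0 d al g \<longleftrightarrow>
     (\<forall>w. is_word S w \<longrightarrow>
        is_run Q0 d w (\<lambda>i. g (pref w i)) \<and>
        (w \<in> lang S Q0 d al \<longrightarrow> rabin_acc al (inf_set (\<lambda>i. g (pref w i)))))"

definition is_gfg ::
  "'a set \<Rightarrow> 'q set \<Rightarrow> ('q \<Rightarrow> 'a \<Rightarrow> 'q set) \<Rightarrow> ('q set \<times> 'q set) set \<Rightarrow> bool" where
  "is_gfg S Q0 d al \<longleftrightarrow> (\<exists>g. gfg_strategy S Q0 d al g)"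

(* Finite-state strategies: transducers with memories M (finite set of naturals),
   initial memory m0, memory update rho, output tau. *)
definition transducer ::
  "'a set \<Rightarrow> 'q set \<Rightarrow> nat set \<Rightarrow> nat \<Rightarrow> (nat \<Rightarrow> 'a \<Rightarrow> nat) \<Rightarrow> (nat \<Rightarrow> 'q) \<Rightarrow> bool" where
  "transducer S Q M m0 rho tau \<longleftrightarrow> finite M \<and> m0 \<in> M \<and>
     (\<forall>m\<in>M. \<forall>a\<in>S. rho m a \<in> M) \<and> (\<forall>m\<in>M. tau m \<in> Q)"

definition strat :: "nat \<Rightarrow> (nat \<Rightarrow> 'a \<Rightarrow> nat) \<Rightarrow> (nat \<Rightarrow> 'q) \<Rightarrow> 'a list \<Rightarrow> 'q" where
  "strat m0 rho tau u = tau (foldl rho m0 u)"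

definition alpha_g :: "nat set \<Rightarrow> (nat \<Rightarrow> 'q) \<Rightarrow> ('q set \<times> 'q set) set \<Rightarrow> (nat set \<times> nat set) set" where
  "alpha_g M tau al = (\<lambda>(E,F). ({m\<in>M. tau m \<in> E}, {m\<in>M. tau m \<in> F})) ` al"

definition is_path :: "'a set \<Rightarrow> nat set \<Rightarrow> (nat \<Rightarrow> 'a \<Rightarrow> nat) \<Rightarrow> nat list \<Rightarrow> bool" where
  "is_path S M rho p \<longleftrightarrow> p \<noteq> [] \<and> set p \<subseteq> M \<and>
     (\<forall>i. Suc i < length p \<longrightarrow> (\<exists>a\<in>S. rho (p ! i) a = p ! Suc i))"

definition paths_from_to :: "'a set \<Rightarrow> nat set \<Rightarrow> (nat \<Rightarrow> 'a \<Rightarrow> nat) \<Rightarrow> nat \<Rightarrow> nat \<Rightarrow> nat list set" where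
  "paths_from_to S M rho m1 m2 = {p. is_path S M rho p \<and> hd p = m1 \<and> last p = m2}"

definition combinations :: "'s list set \<Rightarrow> 's set set" where
  "combinations P = {\<Union>(set ` X) | X. X \<subseteq> P \<and> X \<noteq> {}}"

definition replaceable ::
  "'a set \<Rightarrow> nat set \<Rightarrow> (nat \<Rightarrow> 'a \<Rightarrow> nat) \<Rightarrow> (nat \<Rightarrow> 'q) \<Rightarrow> ('q set \<times> 'q set) set \<Rightarrow> nat \<Rightarrow> nat \<Rightarrow> bool" where
  "replaceable S M rho tau al m m' \<longleftrightarrow> m \<noteq> m' \<and> tau m = tau m' \<and>
     (paths_from_to S M rho m' m = {} \<or>
      (\<forall>C\<in>combinations (paths_from_to S M rho m' m). rabin_acc (alpha_g M tau al) C))"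

definition tight_wrt ::
  "'a set \<Rightarrow> 'q set \<Rightarrow> 'q set \<Rightarrow> ('q \<Rightarrow> 'a \<Rightarrow> 'q set) \<Rightarrow> ('q set \<times> 'q set) set \<Rightarrow>
   nat set \<Rightarrow> nat \<Rightarrow> (nat \<Rightarrow> 'a \<Rightarrow> nat) \<Rightarrow> (nat \<Rightarrow> 'q) \<Rightarrow> bool" where
  "tight_wrt S Q Q0 d al M m0 rho tau \<longleftrightarrow>
     transducer S Q M m0 rho tau \<and> gfg_strategy S Q0 d al (strat m0 rho tau) \<and>
     (\<forall>q\<in>Q. \<forall>a\<in>S. \<forall>q'\<in>d q a. \<exists>u\<in>lists S.
         strat m0 rho tau u = q \<and> strat m0 rho tau (u @ [a]) = q') \<and>
     (\<forall>m\<in>M. \<forall>m'\<in>M. \<not> replaceable S M rho tau al m m')"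

definition tight ::
  "'a set \<Rightarrow> 'q set \<Rightarrow> 'q set \<Rightarrow> ('q \<Rightarrow> 'a \<Rightarrow> 'q set) \<Rightarrow> ('q set \<times> 'q set) set \<Rightarrow> bool" where
  "tight S Q Q0 d al \<longleftrightarrow> (\<exists>M m0 rho tau. tight_wrt S Q Q0 d al M m0 rho tau)"

definition excl_acc_cycle ::
  "'a set \<Rightarrow> nat set \<Rightarrow> (nat \<Rightarrow> 'a \<Rightarrow> nat) \<Rightarrow> (nat \<Rightarrow> 'q) \<Rightarrow> ('q set \<times> 'q set) set \<Rightarrow> 'q \<Rightarrow> nat list \<Rightarrow> bool" where
  "excl_acc_cycle S M rho tau al q p \<longleftrightarrow>
     is_path S M rho p \<and> length p \<ge> 2 \<and> hd p = last p \<and>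
     rabin_acc (alpha_g M tau al) (set p) \<and>
     \<not> rabin_acc (alpha_g M tau al) (set p - {m. tau m = q})"

definition strongly_tight ::
  "'a set \<Rightarrow> 'q set \<Rightarrow> 'q set \<Rightarrow> ('q \<Rightarrow> 'a \<Rightarrow> 'q set) \<Rightarrow> ('q set \<times> 'q set) set \<Rightarrow> bool" where
  "strongly_tight S Q Q0 d al \<longleftrightarrow> (\<exists>M m0 rho tau.
     tight_wrt S Q Q0 d al M m0 rho tau \<and>
     (\<forall>(E,F)\<in>al. \<forall>q\<in>F. \<exists>p. excl_acc_cycle S M rho tau al q p))"

end

theory Submission
  imports Defs
begin

lemma rabin_accI: "(E,F) \<in> al \<Longrightarrow> X \<inter> E = {} \<Longrightarrow> X \<inter> F \<noteq> {} \<Longrightarrow> rabin_acc al X"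
  unfolding rabin_acc_def by (rule bexI[where x="(E,F)"]) simp_all
lemma rabin_accE: "rabin_acc al X \<Longrightarrow> (\<And>E F. (E,F) \<in> al \<Longrightarrow> X \<inter> E = {} \<Longrightarrow> X \<inter> F \<noteq> {} \<Longrightarrow> P) \<Longrightarrow> P"
  unfolding rabin_acc_def by (elim bexE) (simp add: split_beta, metis prod.collapse)
lemma rabin_union:
  assumes "rabin_acc al (A \<union> B)" shows "rabin_acc al A \<or> rabin_acc al B"
proof -
  obtain E F where ef: "(E,F) \<in> al" "(A \<union> B) \<inter> E = {}" "(A \<union> B) \<inter> F \<noteq> {}"
    using assms by (rule rabin_accE)
  then have "(A \<inter> E = {} \<and> A \<inter> F \<noteq> {}) \<or> (B \<inter> E = {} \<and> B \<inter> F \<noteq> {})" by blast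
  then show ?thesis using ef(1) rabin_accI by metis
qed
lemma rabin_inter:
  assumes "\<forall>(E,F)\<in>al. E \<subseteq> Q \<and> F \<subseteq> Q" shows "rabin_acc al Y = rabin_acc al (Y \<inter> Q)"
proof
  assume "rabin_acc al Y"
  then obtain E F where ef: "(E,F) \<in> al" "Y \<inter> E = {}" "Y \<inter> F \<noteq> {}" by (rule rabin_accE)
  then have "E \<subseteq> Q" "F \<subseteq> Q" using assms by auto
  then have "Y \<inter> Q \<inter> E = {}" "Y \<inter> Q \<inter> F \<noteq> {}" using ef by blast+
  then show "rabin_acc al (Y \<inter> Q)" using ef(1) by (intro rabin_accI)
next
  assume "rabin_acc al (Y \<inter> Q)"
  then obtain E F where ef: "(E,F) \<in> al" "Y \<inter> Q \<inter> E = {}" "Y \<inter> Q \<inter> F \<noteq> {}" by (rule rabin_accE)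
  then have "E \<subseteq> Q" "F \<subseteq> Q" using assms by auto
  then have "Y \<inter> E = {}" "Y \<inter> F \<noteq> {}" using ef by blast+
  then show "rabin_acc al Y" using ef(1) by (intro rabin_accI) 
qed

lemma alpha_g_acc: "rabin_acc (alpha_g M tau al) C = rabin_acc al (tau ` (C \<inter> M))"
proof -
  have k: "\<And>E. (C \<inter> {m\<in>M. tau m \<in> E} = {}) = (tau ` (C \<inter> M) \<inter> E = {})" by blast
  show ?thesis unfolding rabin_acc_def alpha_g_def by (simp add: k split_beta)
qed

lemma finite_union_closed:
  assumes "finite A" "A \<noteq> {}" "A \<subseteq> R" "\<forall>x\<in>R. \<forall>y\<in>R. x \<union> y \<in> R" shows "\<Union>A \<in> R"
  using assms by (induction A rule: finite_ne_induct) auto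

lemma exists_R:
  assumes fQ: "finite Q"
    and un: "\<forall>A B. A \<subseteq> Q \<longrightarrow> B \<subseteq> Q \<longrightarrow> \<not> P A \<longrightarrow> \<not> P B \<longrightarrow> \<not> P (A \<union> B)"
    and e: "\<not> P {}" and YA: "\<forall>Y\<in>YA. Y \<subseteq> Q \<and> P Y"
  shows "\<exists>R. R \<subseteq> Pow Q \<and> {Y. Y \<subseteq> Q \<and> \<not> P Y} \<subseteq> R \<and> (\<forall>A\<in>R. \<forall>B\<in>R. A \<union> B \<in> R)
     \<and> R \<inter> YA = {} \<and> (\<forall>W. W \<subseteq> Q \<longrightarrow> W \<notin> R \<longrightarrow> (\<exists>R'\<in>R. W \<union> R' \<in> YA))"
proof -
  define N where "N = {Y. Y \<subseteq> Q \<and> \<not> P Y}"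
  define good where "good R \<longleftrightarrow> R \<subseteq> Pow Q \<and> N \<subseteq> R \<and> (\<forall>A\<in>R. \<forall>B\<in>R. A \<union> B \<in> R) \<and> R \<inter> YA = {}" for R
  define Cand where "Cand = {R. good R}"
  have NC: "N \<in> Cand" unfolding Cand_def mem_Collect_eq good_def
  proof (intro conjI)
    show "N \<subseteq> Pow Q" unfolding N_def by blast
    show "N \<subseteq> N" by (rule subset_refl)
    show "\<forall>A\<in>N. \<forall>B\<in>N. A \<union> B \<in> N" unfolding N_def using un by blast
    show "N \<inter> YA = {}" unfolding N_def using YA by blast
  qed
  have "Cand \<subseteq> Pow (Pow Q)" unfolding Cand_def good_def by blast
  then have fin: "finite Cand" by (rule finite_subset) (simp add: fQ)
  define n where "n = Max (card ` Cand)"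
  have "n \<in> card ` Cand" unfolding n_def using fin NC by (intro Max_in) auto
  then obtain R where R: "R \<in> Cand" "card R = n" by auto
  have Rmax: "\<forall>R'\<in>Cand. card R' \<le> card R" using R fin unfolding n_def by auto
  have gR: "good R" using R(1) unfolding Cand_def by simp
  have RQ: "R \<subseteq> Pow Q" and NR: "N \<subseteq> R" and cl: "\<forall>A\<in>R. \<forall>B\<in>R. A \<union> B \<in> R" and RY: "R \<inter> YA = {}"
    using gR unfolding good_def by blast+
  have eR: "{} \<in> R" using NR e unfolding N_def by blast
  have fR: "finite R" using RQ by (rule finite_subset) (simp add: fQ)
  show ?thesis
  proof (intro exI[of _ R] conjI allI impI)
    show "R \<subseteq> Pow Q" by (rule RQ)
    show "{Y. Y \<subseteq> Q \<and> \<not> P Y} \<subseteq> R" using NR unfolding N_def .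
    show "\<forall>A\<in>R. \<forall>B\<in>R. A \<union> B \<in> R" by (rule cl)
    show "R \<inter> YA = {}" by (rule RY)
  next
    fix W assume W: "W \<subseteq> Q" "W \<notin> R"
    show "\<exists>R'\<in>R. W \<union> R' \<in> YA"
    proof (rule ccontr)
      assume H: "\<not> (\<exists>R'\<in>R. W \<union> R' \<in> YA)"
      define R2 where "R2 = R \<union> (\<lambda>X. W \<union> X) ` R"
      have "good R2" unfolding good_def
      proof (intro conjI)
        show "R2 \<subseteq> Pow Q" using RQ W unfolding R2_def by blast
        show "N \<subseteq> R2" using NR unfolding R2_def by blast
        show "\<forall>A\<in>R2. \<forall>B\<in>R2. A \<union> B \<in> R2"
        proof (intro ballI)
          fix A B assume A: "A \<in> R2" and B: "B \<in> R2"
          obtain a where a: "a \<in> R" "A = a \<or> A = W \<union> a" using A unfolding R2_def by blast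
          obtain b where b: "b \<in> R" "B = b \<or> B = W \<union> b" using B unfolding R2_def by blast
          have ab: "a \<union> b \<in> R" using cl a(1) b(1) by blast
          have c: "(W \<union> a) \<union> (W \<union> b) = W \<union> (a \<union> b)" "a \<union> (W \<union> b) = W \<union> (a \<union> b)"
            "(W \<union> a) \<union> b = W \<union> (a \<union> b)" by auto
          have ab1: "a \<union> b \<in> R2" unfolding R2_def using ab by (rule UnI1)
          have ab2: "W \<union> (a \<union> b) \<in> R2" unfolding R2_def using ab by (intro UnI2 imageI)
          from a(2) b(2) show "A \<union> B \<in> R2" by (elim disjE) (simp_all only: c ab1 ab2)
        qed
        show "R2 \<inter> YA = {}" using RY H unfolding R2_def by blast
      qed
      then have "R2 \<in> Cand" unfolding Cand_def by simp
      have "W \<in> R2" using eR unfolding R2_def by (metis UnI2 Un_empty_right image_eqI)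
      then have "R \<subset> R2" using W unfolding R2_def by blast
      moreover have "finite R2" using fR unfolding R2_def by auto
      ultimately have "card R < card R2" by (simp add: psubset_card_mono)
      moreover have "card R2 \<le> card R" using Rmax \<open>R2 \<in> Cand\<close> by blast
      ultimately show False by simp
    qed
  qed
qed

lemma inf_set_img:
  assumes "finite (range m)"
  shows "inf_set (\<lambda>i. tau (m i)) = tau ` inf_set m"
proof
  show "tau ` inf_set m \<subseteq> inf_set (\<lambda>i. tau (m i))"
    unfolding inf_set_def by (auto elim: frequently_mono[rotated])
next
  show "inf_set (\<lambda>i. tau (m i)) \<subseteq> tau ` inf_set m"
  proof
    fix q assume "q \<in> inf_set (\<lambda>i. tau (m i))"
    then have inf: "infinite {i. tau (m i) = q}" unfolding inf_set_def by (simp add: frequently_cofinite)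
    have eq: "{i. tau (m i) = q} = (\<Union>k\<in>range m. {i. m i = k \<and> tau k = q})" by auto
    obtain k where k: "k \<in> range m" "infinite {i. m i = k \<and> tau k = q}"
      using inf assms unfolding eq by (meson finite_UN_I)
    then have "tau k = q" "infinite {i. m i = k}"
      by (auto intro: infinite_super[of _ "{i. m i = k}"] simp: Collect_empty_eq[symmetric])
    then show "q \<in> tau ` inf_set m" unfolding inf_set_def by (auto simp: frequently_cofinite)
  qed
qed

lemma run_cycle:
  assumes fM: "finite M" and mM: "\<forall>i. m i \<in> M"
    and step: "\<forall>i. \<exists>a\<in>S. rho (m i) a = m (Suc i)"
  shows "\<exists>p. is_path S M rho p \<and> 2 \<le> length p \<and> hd p = last p \<and> set p = inf_set m"
proof -
  define K where "K = inf_set m"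
  define B where "B = {i. m i \<notin> K}"
  have "B = (\<Union>k\<in>M - K. {i. m i = k})" unfolding B_def using mM by auto
  moreover have "\<forall>k\<in>M - K. finite {i. m i = k}"
    unfolding K_def inf_set_def by (auto simp: frequently_cofinite)
  ultimately have "finite B" using fM by auto
  then obtain N where N: "\<forall>i\<in>B. i < N" using finite_nat_set_iff_bounded by blast
  have NK: "\<forall>i\<ge>N. m i \<in> K" using N unfolding B_def by force
  have inf: "\<forall>k\<in>K. \<forall>n. \<exists>j>n. m j = k"
  proof (intro ballI allI)
    fix k n assume "k \<in> K"
    then have "infinite {j. m j = k}" unfolding K_def inf_set_def by (simp add: frequently_cofinite)
    then show "\<exists>j>n. m j = k" using finite_nat_set_iff_bounded_le
      by (metis (mono_tags, lifting) mem_Collect_eq not_le)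
  qed
  have "\<forall>k\<in>K. \<exists>j. j > N \<and> m j = k" using inf by blast
  from bchoice[OF this] obtain f where f: "\<forall>k\<in>K. f k > N \<and> m (f k) = k" by blast
  have "K \<subseteq> M"
  proof
    fix k assume "k \<in> K"
    then obtain j where "m j = k" using inf by blast
    then show "k \<in> M" using mM by blast
  qed
  then have fK: "finite K" using fM finite_subset by blast
  define j1 where "j1 = Max (insert N (f ` K))"
  have j1: "N \<le> j1" "\<forall>k\<in>K. f k \<le> j1" unfolding j1_def using fK by auto
  obtain j where j: "j > j1" "m j = m N" using inf NK by blast
  define p where "p = map m [N..<Suc j]"
  have setp: "set p = m ` {N..j}" unfolding p_def by auto
  have "set p = K"
  proof
    show "set p \<subseteq> K" using setp NK by auto
    show "K \<subseteq> set p"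
    proof
      fix k assume k: "k \<in> K"
      then have "f k \<in> {N..j}" "m (f k) = k" using f j1 j by force+
      then show "k \<in> set p" unfolding setp by (metis image_eqI)
    qed
  qed
  moreover have "2 \<le> length p" unfolding p_def using j j1 by auto
  moreover have "hd p = last p" unfolding p_def using j j1 by (simp add: hd_map last_map)
  moreover have "is_path S M rho p"
    unfolding is_path_def
  proof (intro conjI allI impI)
    show "p \<noteq> []" unfolding p_def using j j1 by auto
    show "set p \<subseteq> M" using setp mM by auto
    fix i assume "Suc i < length p"
    then have "p ! i = m (N + i)" "p ! Suc i = m (Suc (N + i))" unfolding p_def by (simp_all del: upt_Suc)
    then show "\<exists>a\<in>S. rho (p ! i) a = p ! Suc i" using step by auto
  qed
  ultimately show ?thesis unfolding K_def by blast
qed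


lemma pref_Suc: "pref w (Suc i) = pref w i @ [w i]"
  unfolding pref_def by simp

theorem lemma5:
  fixes S :: "'a set" and Q Q0 :: "'q set" and d :: "'q \<Rightarrow> 'a \<Rightarrow> 'q set"
    and al :: "('q set \<times> 'q set) set"
  assumes "wf_rabin S Q Q0 d al"
    and "is_gfg S Q0 d al"
    and "tight S Q Q0 d al"
  shows "\<exists>al'. wf_rabin S Q Q0 d al' \<and> lang S Q0 d al' = lang S Q0 d al \<and>
           is_gfg S Q0 d al' \<and> strongly_tight S Q Q0 d al'"
proof -
  have wf: "finite S" "finite Q" "Q0 \<subseteq> Q" "\<forall>q\<in>Q. \<forall>a\<in>S. d q a \<subseteq> Q" "finite al"
    "\<forall>(E,F)\<in>al. E \<subseteq> Q \<and> F \<subseteq> Q"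
    using assms(1) unfolding wf_rabin_def by auto
  obtain M m0 rho tau where T: "tight_wrt S Q Q0 d al M m0 rho tau"
    using assms(3) unfolding tight_def by blast
  have tr: "transducer S Q M m0 rho tau" and gs: "gfg_strategy S Q0 d al (strat m0 rho tau)"
    and used: "\<forall>q\<in>Q. \<forall>a\<in>S. \<forall>q'\<in>d q a. \<exists>u\<in>lists S.
         strat m0 rho tau u = q \<and> strat m0 rho tau (u @ [a]) = q'"
    and nrep: "\<forall>m\<in>M. \<forall>m'\<in>M. \<not> replaceable S M rho tau al m m'"
    using T unfolding tight_wrt_def by auto
  have fM: "finite M" and m0M: "m0 \<in> M" and rhoM: "\<forall>m\<in>M. \<forall>a\<in>S. rho m a \<in> M"
    and tauQ: "\<forall>m\<in>M. tau m \<in> Q"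
    using tr unfolding transducer_def by auto
  define g where "g = strat m0 rho tau"
  define cyc where "cyc p \<longleftrightarrow> is_path S M rho p \<and> 2 \<le> length p \<and> hd p = last p" for p
  define YA where "YA = {tau ` set p | p. cyc p \<and> rabin_acc al (tau ` set p)}"
  have cycQ: "tau ` set p \<subseteq> Q" if "cyc p" for p
    using that tauQ unfolding cyc_def is_path_def by auto
  have "\<exists>R. R \<subseteq> Pow Q \<and> {Y. Y \<subseteq> Q \<and> \<not> rabin_acc al Y} \<subseteq> R \<and> (\<forall>A\<in>R. \<forall>B\<in>R. A \<union> B \<in> R)
     \<and> R \<inter> YA = {} \<and> (\<forall>W. W \<subseteq> Q \<longrightarrow> W \<notin> R \<longrightarrow> (\<exists>R'\<in>R. W \<union> R' \<in> YA))"
  proof (rule exists_R)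
    show "finite Q" by (rule wf(2))
    show "\<forall>A B. A \<subseteq> Q \<longrightarrow> B \<subseteq> Q \<longrightarrow> \<not> rabin_acc al A \<longrightarrow> \<not> rabin_acc al B \<longrightarrow> \<not> rabin_acc al (A \<union> B)"
      using rabin_union by blast
    show "\<not> rabin_acc al {}" unfolding rabin_acc_def by auto
    show "\<forall>Y\<in>YA. Y \<subseteq> Q \<and> rabin_acc al Y"
    proof
      fix Y assume "Y \<in> YA"
      then obtain p where "cyc p" "Y = tau ` set p" "rabin_acc al (tau ` set p)" unfolding YA_def by blast
      then show "Y \<subseteq> Q \<and> rabin_acc al Y" using cycQ by blast
    qed
  qed
  then obtain RR where RR: "RR \<subseteq> Pow Q \<and> {Y. Y \<subseteq> Q \<and> \<not> rabin_acc al Y} \<subseteq> RR \<and> (\<forall>A\<in>RR. \<forall>B\<in>RR. A \<union> B \<in> RR)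
     \<and> RR \<inter> YA = {} \<and> (\<forall>W. W \<subseteq> Q \<longrightarrow> W \<notin> RR \<longrightarrow> (\<exists>R'\<in>RR. W \<union> R' \<in> YA))" ..
  have RRQ: "RR \<subseteq> Pow Q" using RR by (rule conjunct1)
  have RRN: "{Y. Y \<subseteq> Q \<and> \<not> rabin_acc al Y} \<subseteq> RR" using RR by (elim conjE)
  have RRu: "\<forall>A\<in>RR. \<forall>B\<in>RR. A \<union> B \<in> RR" using RR by (elim conjE)
  have RRY: "RR \<inter> YA = {}" using RR by (elim conjE)
  have RRmax: "\<forall>W. W \<subseteq> Q \<longrightarrow> W \<notin> RR \<longrightarrow> (\<exists>R'\<in>RR. W \<union> R' \<in> YA)" using RR by (elim conjE)
  have "\<not> rabin_acc al {}" unfolding rabin_acc_def by auto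
  then have eRR: "{} \<in> RR" using RRN by blast
  have fRR: "finite RR" using RRQ wf(2) by (meson finite_Pow_iff finite_subset)
  define U where "U X = \<Union>{R\<in>RR. R \<subseteq> X}" for X
  have UR: "U X \<in> RR" for X
    unfolding U_def by (rule finite_union_closed) (use fRR eRR RRu in auto)
  have UX: "U X \<subseteq> X" for X unfolding U_def by auto
  have RU: "R \<in> RR \<Longrightarrow> R \<subseteq> X \<Longrightarrow> R \<subseteq> U X" for R X unfolding U_def by auto
  define al' where "al' = (\<lambda>X. (Q - X, X - U X)) ` {X. X \<subseteq> Q \<and> X \<notin> RR}"
  have al'Q: "\<forall>(E,F)\<in>al'. E \<subseteq> Q \<and> F \<subseteq> Q" unfolding al'_def by auto
  have acc'_iff: "rabin_acc al' Y \<longleftrightarrow> Y \<notin> RR" if "Y \<subseteq> Q" for Y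
  proof
    assume "rabin_acc al' Y"
    then obtain X where X: "X \<subseteq> Q" "X \<notin> RR" "Y \<inter> (Q - X) = {}" "Y \<inter> (X - U X) \<noteq> {}"
      unfolding rabin_acc_def al'_def by auto
    show "Y \<notin> RR"
    proof
      assume "Y \<in> RR"
      moreover have "Y \<subseteq> X" using X(3) that by auto
      ultimately have "Y \<subseteq> U X" by (rule RU)
      then show False using X(4) by auto
    qed
  next
    assume Y: "Y \<notin> RR"
    have "U Y \<noteq> Y" using UR Y by metis
    then have "Y \<inter> (Y - U Y) \<noteq> {}" using UX[of Y] by auto
    moreover have "(Q - Y, Y - U Y) \<in> al'" unfolding al'_def using that Y by auto
    ultimately show "rabin_acc al' Y" unfolding rabin_acc_def by (auto intro!: bexI[of _ "(Q - Y, Y - U Y)"])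
  qed
  have sound: "rabin_acc al Y" if "rabin_acc al' Y" for Y
  proof -
    have "rabin_acc al' (Y \<inter> Q)" using that rabin_inter[OF al'Q, of Y] by simp
    then have "Y \<inter> Q \<notin> RR" using acc'_iff[of "Y \<inter> Q"] by simp
    then have "rabin_acc al (Y \<inter> Q)" using RRN by blast
    then show ?thesis using rabin_inter[OF wf(6), of Y] by simp
  qed
  have complete: "rabin_acc al' Y" if YY: "Y \<in> YA" for Y
  proof -
    obtain p where "cyc p" "Y = tau ` set p" using YY unfolding YA_def by blast
    then have "Y \<subseteq> Q" using cycQ by blast
    moreover have "Y \<notin> RR" using that RRY by auto
    ultimately show ?thesis using acc'_iff[of Y] by simp
  qed
  have grun: "\<exists>p. cyc p \<and> inf_set (\<lambda>i. g (pref w i)) = tau ` set p" if w: "is_word S w" for w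
  proof -
    define mr where "mr i = foldl rho m0 (pref w i)" for i
    have mrS: "mr (Suc i) = rho (mr i) (w i)" for i unfolding mr_def pref_Suc by simp
    have mrM: "mr i \<in> M" for i
    proof (induction i)
      case 0 then show ?case using m0M unfolding mr_def pref_def by simp
    next
      case (Suc i) then show ?case using rhoM w mrS unfolding is_word_def by simp
    qed
    have "\<exists>p. is_path S M rho p \<and> 2 \<le> length p \<and> hd p = last p \<and> set p = inf_set mr"
      by (rule run_cycle) (use fM mrM mrS w in \<open>auto simp: is_word_def\<close>)
    then obtain p where p: "cyc p" "set p = inf_set mr" unfolding cyc_def by blast
    have "finite (range mr)" using mrM fM by (meson finite_subset image_subset_iff)
    then have "inf_set (\<lambda>i. tau (mr i)) = tau ` inf_set mr" by (rule inf_set_img)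
    moreover have "(\<lambda>i. g (pref w i)) = (\<lambda>i. tau (mr i))"
      unfolding g_def strat_def mr_def by simp
    ultimately show ?thesis using p by auto
  qed
  have gacc: "rabin_acc al' (inf_set (\<lambda>i. g (pref w i)))"
    if ww: "is_word S w" "w \<in> lang S Q0 d al" for w
  proof -
    obtain p where p: "cyc p" "inf_set (\<lambda>i. g (pref w i)) = tau ` set p" using grun ww(1) by blast
    have "rabin_acc al (inf_set (\<lambda>i. g (pref w i)))" using gs ww unfolding gfg_strategy_def g_def by blast
    then have "tau ` set p \<in> YA" using p unfolding YA_def by auto
    then show ?thesis using complete p by auto
  qed
  have lang_eq: "lang S Q0 d al' = lang S Q0 d al"
  proof
    show "lang S Q0 d al' \<subseteq> lang S Q0 d al"
      unfolding lang_def using sound by blast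
  next
    show "lang S Q0 d al \<subseteq> lang S Q0 d al'"
    proof
      fix w assume w: "w \<in> lang S Q0 d al"
      then have ww: "is_word S w" unfolding lang_def by auto
      then have "is_run Q0 d w (\<lambda>i. g (pref w i))" using gs unfolding gfg_strategy_def g_def by blast
      then show "w \<in> lang S Q0 d al'" using gacc[OF ww w] ww unfolding lang_def by blast
    qed
  qed
  have gs': "gfg_strategy S Q0 d al' g"
    unfolding gfg_strategy_def
  proof (intro allI impI conjI)
    fix w assume ww: "is_word S w"
    show "is_run Q0 d w (\<lambda>i. g (pref w i))" using gs ww unfolding gfg_strategy_def g_def by blast
    assume "w \<in> lang S Q0 d al'"
    then show "rabin_acc al' (inf_set (\<lambda>i. g (pref w i)))" using gacc ww lang_eq by blast
  qed
  have nrep': "\<forall>m\<in>M. \<forall>m'\<in>M. \<not> replaceable S M rho tau al' m m'"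
  proof (intro ballI notI)
    fix m m' assume mm: "m \<in> M" "m' \<in> M" and r: "replaceable S M rho tau al' m m'"
    have "replaceable S M rho tau al m m'"
      using r sound unfolding replaceable_def alpha_g_acc by blast
    then show False using nrep mm by blast
  qed
  have tw: "tight_wrt S Q Q0 d al' M m0 rho tau"
    unfolding tight_wrt_def using tr gs' used nrep' unfolding g_def by blast
  have excl: "\<forall>(E,F)\<in>al'. \<forall>q\<in>F. \<exists>p. excl_acc_cycle S M rho tau al' q p"
  proof (intro ballI, clarify)
    fix E F q assume EF: "(E, F) \<in> al'" and q: "q \<in> F"
    obtain X where X: "X \<subseteq> Q" "X \<notin> RR" "E = Q - X" "F = X - U X"
      using EF unfolding al'_def by auto
    have qX: "q \<in> X" "q \<notin> U X" using q X by auto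
    have "{q} \<notin> RR" using RU[of "{q}" X] qX by auto
    then obtain R0 where R0: "R0 \<in> RR" "{q} \<union> R0 \<in> YA" using RRmax qX X(1) by blast
    have "q \<notin> R0"
    proof
      assume "q \<in> R0"
      then have "{q} \<union> R0 = R0" by auto
      then show False using R0 RRY by auto
    qed
    obtain p where p: "cyc p" "tau ` set p = {q} \<union> R0"
      using R0(2) unfolding YA_def by auto
    have pM: "set p \<subseteq> M" using p(1) unfolding cyc_def is_path_def by auto
    have "rabin_acc al' (tau ` set p)" using complete R0(2) p(2) by simp
    then have a1: "rabin_acc (alpha_g M tau al') (set p)"
      unfolding alpha_g_acc using pM by (simp add: Int_absorb2)
    have "tau ` ((set p - {m. tau m = q}) \<inter> M) = tau ` set p - {q}" using pM by blast
    also have "\<dots> = R0" using p(2) \<open>q \<notin> R0\<close> by blast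
    finally have "tau ` ((set p - {m. tau m = q}) \<inter> M) = R0" .
    moreover have "R0 \<subseteq> Q" using R0(1) RRQ by auto
    ultimately have a2: "\<not> rabin_acc (alpha_g M tau al') (set p - {m. tau m = q})"
      unfolding alpha_g_acc using acc'_iff[of R0] R0(1) by simp
    show "\<exists>p. excl_acc_cycle S M rho tau al' q p"
      using a1 a2 p(1) unfolding excl_acc_cycle_def cyc_def by blast
  qed
  have wf': "wf_rabin S Q Q0 d al'"
  proof -
    have "finite {X. X \<subseteq> Q \<and> X \<notin> RR}" using wf(2) by (metis (no_types, lifting) Collect_mono Collect_subset finite_Collect_subsets finite_subset)
    then have "finite al'" unfolding al'_def by simp
    then show ?thesis using wf al'Q unfolding wf_rabin_def by blast
  qed
  show ?thesis
  proof (intro exI conjI)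
    show "wf_rabin S Q Q0 d al'" by (rule wf')
    show "lang S Q0 d al' = lang S Q0 d al" by (rule lang_eq)
    show "is_gfg S Q0 d al'" unfolding is_gfg_def using gs' by blast
    show "strongly_tight S Q Q0 d al'" unfolding strongly_tight_def using tw excl by blast
  qed
qed

end
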